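(* Let $X$ be a finite connected poset. Then $\mathcal{P}(X)\subseteq\mathcal{AM}(X)$.
   Context: For $x<y$ in $X$, $e_{xy}$ denotes the incidence-algebra basis element and $B=\{e_{xy}:x<y\}$. $\mathcal{C}(X)$ is the set of maximal chains. For a bijection $\theta:B\to B$ and $C:u_1<\dots<u_m$ in $\mathcal{C}(X)$, $\theta$ is increasing on $C$ if there is $D:v_1<\dots<v_m$ in $\mathcal{C}(X)$ with $\theta(e_{u_iu_j})=e_{v_iv_j}$ for all $i<j$, decreasing if $\theta(e_{u_iu_j})=e_{v_{m-j+1}v_{m-i+1}}$ for all $i<j$. $\mathcal{M}(X)$: bijections $B\to B$ increasing or decreasing on every maximal chain. A walk is a sequence $u_0,\dots,u_m$ where for each $i$ one of $u_i,u_{i+1}$ covers the other; closed if $u_0=u_m$. For a closed walk $\Gamma:u_0,\dots,u_m=u_0$ and $z\in X$: $s^+_{\theta,\Gamma}(z)=|\{i: u_i<u_{i+1},\ \exists w>z,\ \theta(e_{zw})=e_{u_iu_{i+1}}\}|$, $s^-_{\theta,\Gamma}(z)=|\{i: u_i>u_{i+1},\ \exists w>z,\ \theta(e_{zw})=e_{u_{i+1}u_i}\}|$, $t^+_{\theta,\Gamma}(z)=|\{i: u_i<u_{i+1},\ \exists w<z,\ \theta(e_{wz})=e_{u_iu_{i+1}}\}|$, $t^-_{\theta,\Gamma}(z)=|\{i: u_i>u_{i+1},\ \exists w<z,\ \theta(e_{wz})=e_{u_{i+1}u_i}\}|$, $0\le i\le m-1$. $\theta$ is admissible if $s^+-s^-=t^+-t^-$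 at every $z$ for every closed walk; $\mathcal{AM}(X)$ is the set of admissible elements of $\mathcal{M}(X)$. $\theta:B\to B$ is proper if there is an automorphism $\lambda$ of $X$ with $\theta(e_{xy})=e_{\lambda(x)\lambda(y)}$ for all $x<y$, or an anti-automorphism $\lambda$ with $\theta(e_{xy})=e_{\lambda(y)\lambda(x)}$ for all $x<y$; $\mathcal{P}(X)$ is the set of proper bijections. *)

theory Defs
  imports Main
begin

text \<open>A finite poset is represented by a finite carrier set X of a type of class order,
  with the induced order. The basis element e_xy (x<y) is represented by the pair (x,y).\<close>

definition basisB :: "'a::order set \<Rightarrow> ('a \<times> 'a) set" where
  "basisB X = {(x, y). x \<in> X \<and> y \<in> X \<and> x < y}"

definition is_chain :: "'a::order set \<Rightarrow> 'a set \<Rightarrow> bool" where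
  "is_chain X C \<longleftrightarrow> C \<subseteq> X \<and> (\<forall>x\<in>C. \<forall>y\<in>C. x \<le> y \<or> y \<le> x)"

definition is_max_chain :: "'a::order set \<Rightarrow> 'a set \<Rightarrow> bool" where
  "is_max_chain X C \<longleftrightarrow> is_chain X C \<and> (\<forall>C'. is_chain X C' \<and> C \<subseteq> C' \<longrightarrow> C' = C)"

definition max_chain_list :: "'a::order set \<Rightarrow> 'a list \<Rightarrow> bool" where
  "max_chain_list X us \<longleftrightarrow> sorted_wrt (<) us \<and> is_max_chain X (set us)"

definition increasing_on :: "'a::order set \<Rightarrow> ('a \<times> 'a \<Rightarrow> 'a \<times> 'a) \<Rightarrow> 'a list \<Rightarrow> bool" where
  "increasing_on X \<theta> us \<longleftrightarrow> (\<exists>vs. max_chain_list X vs \<and> length vs = length us \<and>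
     (\<forall>i j. i < j \<and> j < length us \<longrightarrow> \<theta> (us ! i, us ! j) = (vs ! i, vs ! j)))"

text \<open>0-indexed version of theta(e_{u_i u_j}) = e_{v_{m-j+1} v_{m-i+1}}.\<close>
definition decreasing_on :: "'a::order set \<Rightarrow> ('a \<times> 'a \<Rightarrow> 'a \<times> 'a) \<Rightarrow> 'a list \<Rightarrow> bool" where
  "decreasing_on X \<theta> us \<longleftrightarrow> (\<exists>vs. max_chain_list X vs \<and> length vs = length us \<and>
     (\<forall>i j. i < j \<and> j < length us \<longrightarrow>
        \<theta> (us ! i, us ! j) = (vs ! (length us - 1 - j), vs ! (length us - 1 - i))))"

definition M_set :: "'a::order set \<Rightarrow> ('a \<times> 'a \<Rightarrow> 'a \<times> 'a) set" where
  "M_set X = {\<theta>. bij_betw \<theta> (basisB X) (basisB X) \<and>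
     (\<forall>us. max_chain_list X us \<longrightarrow> increasing_on X \<theta> us \<or> decreasing_on X \<theta> us)}"

definition covers :: "'a::order set \<Rightarrow> 'a \<Rightarrow> 'a \<Rightarrow> bool" where
  "covers X y x \<longleftrightarrow> x \<in> X \<and> y \<in> X \<and> x < y \<and> \<not> (\<exists>z\<in>X. x < z \<and> z < y)"

definition is_walk :: "'a::order set \<Rightarrow> 'a list \<Rightarrow> bool" where
  "is_walk X us \<longleftrightarrow> us \<noteq> [] \<and> set us \<subseteq> X \<and>
     (\<forall>i. Suc i < length us \<longrightarrow> covers X (us ! i) (us ! Suc i) \<or> covers X (us ! Suc i) (us ! i))"

definition closed_walk :: "'a::order set \<Rightarrow> 'a list \<Rightarrow> bool" where
  "closed_walk X us \<longleftrightarrow> is_walk X us \<and> hd us = last us"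

definition s_plus :: "'a::order set \<Rightarrow> ('a \<times> 'a \<Rightarrow> 'a \<times> 'a) \<Rightarrow> 'a list \<Rightarrow> 'a \<Rightarrow> nat" where
  "s_plus X \<theta> us z = card {i. Suc i < length us \<and> us ! i < us ! Suc i \<and>
     (\<exists>w\<in>X. z < w \<and> \<theta> (z, w) = (us ! i, us ! Suc i))}"

definition s_minus :: "'a::order set \<Rightarrow> ('a \<times> 'a \<Rightarrow> 'a \<times> 'a) \<Rightarrow> 'a list \<Rightarrow> 'a \<Rightarrow> nat" where
  "s_minus X \<theta> us z = card {i. Suc i < length us \<and> us ! i > us ! Suc i \<and>
     (\<exists>w\<in>X. z < w \<and> \<theta> (z, w) = (us ! Suc i, us ! i))}"

definition t_plus :: "'a::order set \<Rightarrow> ('a \<times> 'a \<Rightarrow> 'a \<times> 'a) \<Rightarrow> 'a list \<Rightarrow> 'a \<Rightarrow> nat" where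
  "t_plus X \<theta> us z = card {i. Suc i < length us \<and> us ! i < us ! Suc i \<and>
     (\<exists>w\<in>X. w < z \<and> \<theta> (w, z) = (us ! i, us ! Suc i))}"

definition t_minus :: "'a::order set \<Rightarrow> ('a \<times> 'a \<Rightarrow> 'a \<times> 'a) \<Rightarrow> 'a list \<Rightarrow> 'a \<Rightarrow> nat" where
  "t_minus X \<theta> us z = card {i. Suc i < length us \<and> us ! i > us ! Suc i \<and>
     (\<exists>w\<in>X. w < z \<and> \<theta> (w, z) = (us ! Suc i, us ! i))}"

definition admissible :: "'a::order set \<Rightarrow> ('a \<times> 'a \<Rightarrow> 'a \<times> 'a) \<Rightarrow> bool" where
  "admissible X \<theta> \<longleftrightarrow> (\<forall>us. closed_walk X us \<longrightarrow> (\<forall>z\<in>X.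
     int (s_plus X \<theta> us z) - int (s_minus X \<theta> us z) = int (t_plus X \<theta> us z) - int (t_minus X \<theta> us z)))"

definition AM_set :: "'a::order set \<Rightarrow> ('a \<times> 'a \<Rightarrow> 'a \<times> 'a) set" where
  "AM_set X = {\<theta> \<in> M_set X. admissible X \<theta>}"

definition poset_automorphism :: "'a::order set \<Rightarrow> ('a \<Rightarrow> 'a) \<Rightarrow> bool" where
  "poset_automorphism X f \<longleftrightarrow> bij_betw f X X \<and> (\<forall>x\<in>X. \<forall>y\<in>X. x \<le> y \<longleftrightarrow> f x \<le> f y)"

definition poset_anti_automorphism :: "'a::order set \<Rightarrow> ('a \<Rightarrow> 'a) \<Rightarrow> bool" where
  "poset_anti_automorphism X f \<longleftrightarrow> bij_betw f X X \<and> (\<forall>x\<in>X. \<forall>y\<in>X. x \<le> y \<longleftrightarrow> f y \<le> f x)"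

definition P_set :: "'a::order set \<Rightarrow> ('a \<times> 'a \<Rightarrow> 'a \<times> 'a) set" where
  "P_set X = {\<theta>. bij_betw \<theta> (basisB X) (basisB X) \<and>
     ((\<exists>f. poset_automorphism X f \<and> (\<forall>(x, y)\<in>basisB X. \<theta> (x, y) = (f x, f y))) \<or>
      (\<exists>f. poset_anti_automorphism X f \<and> (\<forall>(x, y)\<in>basisB X. \<theta> (x, y) = (f y, f x))))}"

definition poset_connected :: "'a::order set \<Rightarrow> bool" where
  "poset_connected X \<longleftrightarrow> (\<forall>x\<in>X. \<forall>y\<in>X.
     (x, y) \<in> ({(a, b). a \<in> X \<and> b \<in> X \<and> (a \<le> b \<or> b \<le> a)})\<^sup>*)"

end

theory Submission
  imports Defs
begin

lemma closed_count:
  assumes "us \<noteq> []" "hd us = last us"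
  shows "card {i. Suc i < length us \<and> us ! i = a} = card {i. Suc i < length us \<and> us ! Suc i = a}"
proof -
  have e1: "{i. Suc i < length us \<and> us ! i = a} = {i. i < length (butlast us) \<and> butlast us ! i = a}"
    by (auto simp: nth_butlast)
  have e2: "{i. Suc i < length us \<and> us ! Suc i = a} = {i. i < length (tl us) \<and> tl us ! i = a}"
    by (auto simp: nth_tl)
  have "length (filter ((=) a) (butlast us)) = length (filter ((=) a) (tl us))"
  proof (cases us)
    case Nil then show ?thesis using assms by simp
  next
    case (Cons x ys)
    show ?thesis
    proof (cases "ys = []")
      case True then show ?thesis using Cons by simp
    next
      case False
      then obtain zs where ys: "ys = zs @ [last ys]" by (metis append_butlast_last_id)
      have "last ys = x" using assms Cons False by simp
      then have "ys = zs @ [x]" using ys by simp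
      then show ?thesis using Cons by simp
    qed
  qed
  then show ?thesis unfolding e1 e2 length_filter_conv_card by (simp add: eq_commute)
qed

lemma walk_balance:
  assumes "closed_walk X us"
  shows "card {i. Suc i < length us \<and> us ! i < us ! Suc i \<and> us ! i = a}
       + card {i. Suc i < length us \<and> us ! i > us ! Suc i \<and> us ! i = a}
       = card {i. Suc i < length us \<and> us ! i < us ! Suc i \<and> us ! Suc i = a}
       + card {i. Suc i < length us \<and> us ! i > us ! Suc i \<and> us ! Suc i = a}"
proof -
  have step: "\<And>i. Suc i < length us \<Longrightarrow> us ! i < us ! Suc i \<or> us ! Suc i < us ! i"
    using assms unfolding closed_walk_def is_walk_def covers_def by blast
  have ne: "us \<noteq> []" "hd us = last us" using assms unfolding closed_walk_def is_walk_def by auto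
  have fin: "finite {i. Suc i < length us \<and> P i}" for P
    by (rule finite_subset[of _ "{..<length us}"]) auto
  have u1: "{i. Suc i < length us \<and> us ! i = a} =
     {i. Suc i < length us \<and> us ! i < us ! Suc i \<and> us ! i = a} \<union>
     {i. Suc i < length us \<and> us ! i > us ! Suc i \<and> us ! i = a}"
    using step by blast
  have u2: "{i. Suc i < length us \<and> us ! Suc i = a} =
     {i. Suc i < length us \<and> us ! i < us ! Suc i \<and> us ! Suc i = a} \<union>
     {i. Suc i < length us \<and> us ! i > us ! Suc i \<and> us ! Suc i = a}"
    using step by blast
  have c1: "card {i. Suc i < length us \<and> us ! i = a} =
     card {i. Suc i < length us \<and> us ! i < us ! Suc i \<and> us ! i = a} +
     card {i. Suc i < length us \<and> us ! i > us ! Suc i \<and> us ! i = a}"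
    unfolding u1 by (rule card_Un_disjoint) (auto intro: fin)
  have c2: "card {i. Suc i < length us \<and> us ! Suc i = a} =
     card {i. Suc i < length us \<and> us ! i < us ! Suc i \<and> us ! Suc i = a} +
     card {i. Suc i < length us \<and> us ! i > us ! Suc i \<and> us ! Suc i = a}"
    unfolding u2 by (rule card_Un_disjoint) (auto intro: fin)
  show ?thesis using c1 c2 closed_count[OF ne, of a] by simp
qed

lemma lt_pres:
  assumes "poset_automorphism X f" "x \<in> X" "y \<in> X"
  shows "x < y \<longleftrightarrow> f x < f y"
  using assms unfolding poset_automorphism_def bij_betw_def inj_on_def
  by (metis order.strict_iff_not)

lemma lt_rev:
  assumes "poset_anti_automorphism X f" "x \<in> X" "y \<in> X"
  shows "x < y \<longleftrightarrow> f y < f x"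
  using assms unfolding poset_anti_automorphism_def bij_betw_def inj_on_def
  by (metis order.strict_iff_not)

lemma cmp_chain:
  assumes "bij_betw f X X" "\<forall>x\<in>X. \<forall>y\<in>X. (x \<le> y \<or> y \<le> x) \<longleftrightarrow> (f x \<le> f y \<or> f y \<le> f x)"
    "is_chain X C"
  shows "is_chain X (f ` C)"
proof -
  have CX: "C \<subseteq> X" and cc: "\<forall>x\<in>C. \<forall>y\<in>C. x \<le> y \<or> y \<le> x"
    using assms(3) unfolding is_chain_def by auto
  have fX: "f ` X = X" using assms(1) unfolding bij_betw_def by simp
  have "f ` C \<subseteq> X" using CX fX by blast
  moreover have "\<forall>a\<in>f ` C. \<forall>b\<in>f ` C. a \<le> b \<or> b \<le> a"
  proof (intro ballI)
    fix a b assume "a \<in> f ` C" "b \<in> f ` C"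
    then obtain x y where "x \<in> C" "y \<in> C" "a = f x" "b = f y" by blast
    then show "a \<le> b \<or> b \<le> a" using cc CX assms(2) by blast
  qed
  ultimately show ?thesis unfolding is_chain_def by blast
qed

lemma cmp_max_chain:
  assumes "bij_betw f X X" "\<forall>x\<in>X. \<forall>y\<in>X. (x \<le> y \<or> y \<le> x) \<longleftrightarrow> (f x \<le> f y \<or> f y \<le> f x)"
    "is_max_chain X C"
  shows "is_max_chain X (f ` C)"
proof -
  define g where "g = inv_into X f"
  have gb: "bij_betw g X X" unfolding g_def by (rule bij_betw_inv_into[OF assms(1)])
  have fg: "\<And>a. a \<in> X \<Longrightarrow> f (g a) = a" unfolding g_def
    using assms(1) by (simp add: bij_betw_def f_inv_into_f)
  have gf: "\<And>a. a \<in> X \<Longrightarrow> g (f a) = a" unfolding g_def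
    using assms(1) by (simp add: bij_betw_def)
  have gX: "\<And>a. a \<in> X \<Longrightarrow> g a \<in> X" using gb bij_betwE by blast
  have gc: "\<forall>x\<in>X. \<forall>y\<in>X. (x \<le> y \<or> y \<le> x) \<longleftrightarrow> (g x \<le> g y \<or> g y \<le> g x)"
  proof (intro ballI)
    fix x y assume xy: "x \<in> X" "y \<in> X"
    have "(g x \<le> g y \<or> g y \<le> g x) \<longleftrightarrow> (f (g x) \<le> f (g y) \<or> f (g y) \<le> f (g x))"
      using assms(2) gX xy by blast
    then show "(x \<le> y \<or> y \<le> x) \<longleftrightarrow> (g x \<le> g y \<or> g y \<le> g x)" using fg xy by simp
  qed
  have CX: "C \<subseteq> X" using assms(3) unfolding is_max_chain_def is_chain_def by blast
  show ?thesis unfolding is_max_chain_def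
  proof (intro conjI allI impI)
    have "is_chain X C" using assms(3) unfolding is_max_chain_def by blast
    then show "is_chain X (f ` C)" by (rule cmp_chain[OF assms(1,2)])
  next
    fix C' assume h: "is_chain X C' \<and> f ` C \<subseteq> C'"
    have C'X: "C' \<subseteq> X" using h unfolding is_chain_def by blast
    have "is_chain X (g ` C')" using cmp_chain[OF gb gc] h by simp
    moreover have "C \<subseteq> g ` C'"
    proof
      fix c assume c: "c \<in> C"
      then have "f c \<in> C'" using h by blast
      moreover have "g (f c) = c" using gf c CX by blast
      ultimately show "c \<in> g ` C'" by (metis imageI)
    qed
    ultimately have "g ` C' = C" using assms(3) unfolding is_max_chain_def by blast
    then have "f ` g ` C' = f ` C" by simp
    moreover have "f ` g ` C' = C'"
    proof -
      have "f ` g ` C' = (\<lambda>a. f (g a)) ` C'" by (simp add: image_image)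
      also have "\<dots> = (\<lambda>a. a) ` C'" using fg C'X by (intro image_cong) auto
      finally show ?thesis by simp
    qed
    ultimately show "C' = f ` C" by simp
  qed
qed

lemma auto_M:
  assumes "poset_automorphism X f" "\<forall>(x, y)\<in>basisB X. \<theta> (x, y) = (f x, f y)"
    "max_chain_list X us"
  shows "increasing_on X \<theta> us"
proof -
  have usX: "set us \<subseteq> X" using assms(3) unfolding max_chain_list_def is_max_chain_def is_chain_def by blast
  have so: "sorted_wrt (<) us" using assms(3) unfolding max_chain_list_def by blast
  have bf: "bij_betw f X X" using assms(1) unfolding poset_automorphism_def by blast
  have cm: "\<forall>x\<in>X. \<forall>y\<in>X. (x \<le> y \<or> y \<le> x) \<longleftrightarrow> (f x \<le> f y \<or> f y \<le> f x)"
    using assms(1) unfolding poset_automorphism_def by blast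
  have "sorted_wrt (<) (map f us)"
    unfolding sorted_wrt_map
    by (rule sorted_wrt_mono_rel[OF _ so]) (use lt_pres[OF assms(1)] usX in blast)
  moreover have "is_max_chain X (set (map f us))"
    using cmp_max_chain[OF bf cm] assms(3) unfolding max_chain_list_def by simp
  moreover have "\<forall>i j. i < j \<and> j < length us \<longrightarrow> \<theta> (us ! i, us ! j) = (map f us ! i, map f us ! j)"
  proof (intro allI impI)
    fix i j assume ij: "i < j \<and> j < length us"
    have "(us ! i, us ! j) \<in> basisB X" unfolding basisB_def
      using ij usX sorted_wrt_nth_less[OF so] by auto
    then show "\<theta> (us ! i, us ! j) = (map f us ! i, map f us ! j)" using assms(2) ij by auto
  qed
  ultimately show ?thesis unfolding increasing_on_def max_chain_list_def
    by (intro exI[of _ "map f us"]) auto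
qed

lemma anti_M:
  assumes "poset_anti_automorphism X f" "\<forall>(x, y)\<in>basisB X. \<theta> (x, y) = (f y, f x)"
    "max_chain_list X us"
  shows "decreasing_on X \<theta> us"
proof -
  have usX: "set us \<subseteq> X" using assms(3) unfolding max_chain_list_def is_max_chain_def is_chain_def by blast
  have so: "sorted_wrt (<) us" using assms(3) unfolding max_chain_list_def by blast
  have bf: "bij_betw f X X" using assms(1) unfolding poset_anti_automorphism_def by blast
  have cm: "\<forall>x\<in>X. \<forall>y\<in>X. (x \<le> y \<or> y \<le> x) \<longleftrightarrow> (f x \<le> f y \<or> f y \<le> f x)"
    using assms(1) unfolding poset_anti_automorphism_def by blast
  have "sorted_wrt (<) (rev (map f us))"
    unfolding sorted_wrt_rev sorted_wrt_map
    by (rule sorted_wrt_mono_rel[OF _ so]) (use lt_rev[OF assms(1)] usX in blast)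
  moreover have "is_max_chain X (set (rev (map f us)))"
    using cmp_max_chain[OF bf cm] assms(3) unfolding max_chain_list_def by simp
  moreover have "\<forall>i j. i < j \<and> j < length us \<longrightarrow> \<theta> (us ! i, us ! j) =
     (rev (map f us) ! (length us - 1 - j), rev (map f us) ! (length us - 1 - i))"
  proof (intro allI impI)
    fix i j assume ij: "i < j \<and> j < length us"
    have "(us ! i, us ! j) \<in> basisB X" unfolding basisB_def
      using ij usX sorted_wrt_nth_less[OF so] by auto
    then have "\<theta> (us ! i, us ! j) = (f (us ! j), f (us ! i))" using assms(2) by auto
    moreover have "rev (map f us) ! (length us - 1 - j) = f (us ! j)"
    proof -
      have e: "length us - Suc (length us - 1 - j) = j" using ij by linarith
      have "rev (map f us) ! (length us - 1 - j) = map f us ! (length (map f us) - Suc (length us - 1 - j))"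
        by (rule rev_nth) (insert ij, auto)
      then show ?thesis unfolding e using ij by simp
    qed
    moreover have "rev (map f us) ! (length us - 1 - i) = f (us ! i)"
    proof -
      have e: "length us - Suc (length us - 1 - i) = i" using ij by linarith
      have "rev (map f us) ! (length us - 1 - i) = map f us ! (length (map f us) - Suc (length us - 1 - i))"
        by (rule rev_nth) (insert ij, auto)
      then show ?thesis unfolding e using ij by simp
    qed
    ultimately show "\<theta> (us ! i, us ! j) =
     (rev (map f us) ! (length us - 1 - j), rev (map f us) ! (length us - 1 - i))" by simp
  qed
  ultimately show ?thesis unfolding decreasing_on_def max_chain_list_def
    by (intro exI[of _ "rev (map f us)"]) auto
qed

lemma auto_adm:
  assumes "poset_automorphism X f" "\<forall>(x, y)\<in>basisB X. \<theta> (x, y) = (f x, f y)"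
  shows "admissible X \<theta>"
  unfolding admissible_def
proof (intro allI impI ballI)
  fix us z assume cw: "closed_walk X us" and zX: "z \<in> X"
  have nthX: "\<And>i. Suc i < length us \<Longrightarrow> us ! i \<in> X \<and> us ! Suc i \<in> X"
    using cw unfolding closed_walk_def is_walk_def by (meson Suc_lessD nth_mem subsetD)
  have surj: "\<And>b. b \<in> X \<Longrightarrow> \<exists>w\<in>X. f w = b"
    using assms(1) unfolding poset_automorphism_def bij_betw_def by (metis imageE)
  have fX: "f z \<in> X" using assms(1) zX unfolding poset_automorphism_def bij_betw_def by blast
  have th: "\<And>x y. x \<in> X \<Longrightarrow> y \<in> X \<Longrightarrow> x < y \<Longrightarrow> \<theta> (x, y) = (f x, f y)"
    using assms(2) unfolding basisB_def by blast
  have key1: "(\<exists>w\<in>X. z < w \<and> \<theta> (z, w) = (a, b)) \<longleftrightarrow> a = f z"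
    if ab: "a \<in> X" "b \<in> X" "a < b" for a b
  proof
    assume "\<exists>w\<in>X. z < w \<and> \<theta> (z, w) = (a, b)"
    then show "a = f z" using th zX by fastforce
  next
    assume a: "a = f z"
    obtain w where w: "w \<in> X" "f w = b" using surj ab by blast
    have "z < w" using lt_pres[OF assms(1) zX w(1)] a w ab by simp
    then show "\<exists>w\<in>X. z < w \<and> \<theta> (z, w) = (a, b)" using th zX w a by auto
  qed
  have key2: "(\<exists>w\<in>X. w < z \<and> \<theta> (w, z) = (a, b)) \<longleftrightarrow> b = f z"
    if ab: "a \<in> X" "b \<in> X" "a < b" for a b
  proof
    assume "\<exists>w\<in>X. w < z \<and> \<theta> (w, z) = (a, b)"
    then show "b = f z" using th zX by fastforce
  next
    assume b: "b = f z"
    obtain w where w: "w \<in> X" "f w = a" using surj ab by blast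
    have "w < z" using lt_pres[OF assms(1) w(1) zX] b w ab by simp
    then show "\<exists>w\<in>X. w < z \<and> \<theta> (w, z) = (a, b)" using th zX w b by auto
  qed
  have sp: "s_plus X \<theta> us z = card {i. Suc i < length us \<and> us ! i < us ! Suc i \<and> us ! i = f z}"
    unfolding s_plus_def
  proof (intro arg_cong[where f=card] Collect_cong)
    fix i show "(Suc i < length us \<and> us ! i < us ! Suc i \<and> (\<exists>w\<in>X. z < w \<and> \<theta> (z, w) = (us ! i, us ! Suc i)))
      = (Suc i < length us \<and> us ! i < us ! Suc i \<and> us ! i = f z)"
      using key1[of "us ! i" "us ! Suc i"] nthX[of i] by blast
  qed
  have sm: "s_minus X \<theta> us z = card {i. Suc i < length us \<and> us ! i > us ! Suc i \<and> us ! Suc i = f z}"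
    unfolding s_minus_def
  proof (intro arg_cong[where f=card] Collect_cong)
    fix i show "(Suc i < length us \<and> us ! i > us ! Suc i \<and> (\<exists>w\<in>X. z < w \<and> \<theta> (z, w) = (us ! Suc i, us ! i)))
      = (Suc i < length us \<and> us ! i > us ! Suc i \<and> us ! Suc i = f z)"
      using key1[of "us ! Suc i" "us ! i"] nthX[of i] by blast
  qed
  have tp: "t_plus X \<theta> us z = card {i. Suc i < length us \<and> us ! i < us ! Suc i \<and> us ! Suc i = f z}"
    unfolding t_plus_def
  proof (intro arg_cong[where f=card] Collect_cong)
    fix i show "(Suc i < length us \<and> us ! i < us ! Suc i \<and> (\<exists>w\<in>X. w < z \<and> \<theta> (w, z) = (us ! i, us ! Suc i)))
      = (Suc i < length us \<and> us ! i < us ! Suc i \<and> us ! Suc i = f z)"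
      using key2[of "us ! i" "us ! Suc i"] nthX[of i] by blast
  qed
  have tm: "t_minus X \<theta> us z = card {i. Suc i < length us \<and> us ! i > us ! Suc i \<and> us ! i = f z}"
    unfolding t_minus_def
  proof (intro arg_cong[where f=card] Collect_cong)
    fix i show "(Suc i < length us \<and> us ! i > us ! Suc i \<and> (\<exists>w\<in>X. w < z \<and> \<theta> (w, z) = (us ! Suc i, us ! i)))
      = (Suc i < length us \<and> us ! i > us ! Suc i \<and> us ! i = f z)"
      using key2[of "us ! Suc i" "us ! i"] nthX[of i] by blast
  qed
  show "int (s_plus X \<theta> us z) - int (s_minus X \<theta> us z) = int (t_plus X \<theta> us z) - int (t_minus X \<theta> us z)"
    unfolding sp sm tp tm using walk_balance[OF cw, of "f z"] by linarith
qed

lemma anti_adm: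
  assumes "poset_anti_automorphism X f" "\<forall>(x, y)\<in>basisB X. \<theta> (x, y) = (f y, f x)"
  shows "admissible X \<theta>"
  unfolding admissible_def
proof (intro allI impI ballI)
  fix us z assume cw: "closed_walk X us" and zX: "z \<in> X"
  have nthX: "\<And>i. Suc i < length us \<Longrightarrow> us ! i \<in> X \<and> us ! Suc i \<in> X"
    using cw unfolding closed_walk_def is_walk_def by (meson Suc_lessD nth_mem subsetD)
  have surj: "\<And>b. b \<in> X \<Longrightarrow> \<exists>w\<in>X. f w = b"
    using assms(1) unfolding poset_anti_automorphism_def bij_betw_def by (metis imageE)
  have th: "\<And>x y. x \<in> X \<Longrightarrow> y \<in> X \<Longrightarrow> x < y \<Longrightarrow> \<theta> (x, y) = (f y, f x)"
    using assms(2) unfolding basisB_def by blast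
  have key1: "(\<exists>w\<in>X. z < w \<and> \<theta> (z, w) = (a, b)) \<longleftrightarrow> b = f z"
    if ab: "a \<in> X" "b \<in> X" "a < b" for a b
  proof
    assume "\<exists>w\<in>X. z < w \<and> \<theta> (z, w) = (a, b)"
    then show "b = f z" using th zX by fastforce
  next
    assume b: "b = f z"
    obtain w where w: "w \<in> X" "f w = a" using surj ab by blast
    have "z < w" using lt_rev[OF assms(1) zX w(1)] b w ab by simp
    then show "\<exists>w\<in>X. z < w \<and> \<theta> (z, w) = (a, b)" using th zX w b by auto
  qed
  have key2: "(\<exists>w\<in>X. w < z \<and> \<theta> (w, z) = (a, b)) \<longleftrightarrow> a = f z"
    if ab: "a \<in> X" "b \<in> X" "a < b" for a b
  proof
    assume "\<exists>w\<in>X. w < z \<and> \<theta> (w, z) = (a, b)"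
    then show "a = f z" using th zX by fastforce
  next
    assume a: "a = f z"
    obtain w where w: "w \<in> X" "f w = b" using surj ab by blast
    have "w < z" using lt_rev[OF assms(1) w(1) zX] a w ab by simp
    then show "\<exists>w\<in>X. w < z \<and> \<theta> (w, z) = (a, b)" using th zX w a by auto
  qed
  have sp: "s_plus X \<theta> us z = card {i. Suc i < length us \<and> us ! i < us ! Suc i \<and> us ! Suc i = f z}"
    unfolding s_plus_def
  proof (intro arg_cong[where f=card] Collect_cong)
    fix i show "(Suc i < length us \<and> us ! i < us ! Suc i \<and> (\<exists>w\<in>X. z < w \<and> \<theta> (z, w) = (us ! i, us ! Suc i)))
      = (Suc i < length us \<and> us ! i < us ! Suc i \<and> us ! Suc i = f z)"
      using key1[of "us ! i" "us ! Suc i"] nthX[of i] by blast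
  qed
  have sm: "s_minus X \<theta> us z = card {i. Suc i < length us \<and> us ! i > us ! Suc i \<and> us ! i = f z}"
    unfolding s_minus_def
  proof (intro arg_cong[where f=card] Collect_cong)
    fix i show "(Suc i < length us \<and> us ! i > us ! Suc i \<and> (\<exists>w\<in>X. z < w \<and> \<theta> (z, w) = (us ! Suc i, us ! i)))
      = (Suc i < length us \<and> us ! i > us ! Suc i \<and> us ! i = f z)"
      using key1[of "us ! Suc i" "us ! i"] nthX[of i] by blast
  qed
  have tp: "t_plus X \<theta> us z = card {i. Suc i < length us \<and> us ! i < us ! Suc i \<and> us ! i = f z}"
    unfolding t_plus_def
  proof (intro arg_cong[where f=card] Collect_cong)
    fix i show "(Suc i < length us \<and> us ! i < us ! Suc i \<and> (\<exists>w\<in>X. w < z \<and> \<theta> (w, z) = (us ! i, us ! Suc i)))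
      = (Suc i < length us \<and> us ! i < us ! Suc i \<and> us ! i = f z)"
      using key2[of "us ! i" "us ! Suc i"] nthX[of i] by blast
  qed
  have tm: "t_minus X \<theta> us z = card {i. Suc i < length us \<and> us ! i > us ! Suc i \<and> us ! Suc i = f z}"
    unfolding t_minus_def
  proof (intro arg_cong[where f=card] Collect_cong)
    fix i show "(Suc i < length us \<and> us ! i > us ! Suc i \<and> (\<exists>w\<in>X. w < z \<and> \<theta> (w, z) = (us ! Suc i, us ! i)))
      = (Suc i < length us \<and> us ! i > us ! Suc i \<and> us ! Suc i = f z)"
      using key2[of "us ! Suc i" "us ! i"] nthX[of i] by blast
  qed
  show "int (s_plus X \<theta> us z) - int (s_minus X \<theta> us z) = int (t_plus X \<theta> us z) - int (t_minus X \<theta> us z)"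
    unfolding sp sm tp tm using walk_balance[OF cw, of "f z"] by linarith
qed

theorem proposition2p5:
  fixes X :: "'a::order set"
  assumes "finite X" and "poset_connected X"
  shows "P_set X \<subseteq> AM_set X"
proof
  fix \<theta> assume h: "\<theta> \<in> P_set X"
  then have b: "bij_betw \<theta> (basisB X) (basisB X)" unfolding P_set_def by blast
  from h consider
    (a) f where "poset_automorphism X f" "\<forall>(x, y)\<in>basisB X. \<theta> (x, y) = (f x, f y)"
  | (r) f where "poset_anti_automorphism X f" "\<forall>(x, y)\<in>basisB X. \<theta> (x, y) = (f y, f x)"
    unfolding P_set_def by blast
  then show "\<theta> \<in> AM_set X"
  proof cases
    case a
    then show ?thesis unfolding AM_set_def M_set_def using b auto_M auto_adm by blast
  next
    case r
    then show ?thesis unfolding AM_set_def M_set_def using b anti_M anti_adm by blast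
  qed
qed

end
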